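(* Let $\kappa$ be an uncountable regular cardinal, let $\mathcal{I}$ be a $\kappa$-complete proper ideal on $\kappa$ containing every bounded subset of $\kappa$, and let $\nu\in\{2,\kappa\}$. Consider ${}^{\kappa}\nu$ with the topology $\tau_{\mathcal{I}}$. Then: (1) $\tau_{\mathcal{I}}$ is perfect (no isolated points), regular Hausdorff, and zero-dimensional (has a basis of clopen sets). (2) For any ordinal $\alpha$: the intersection of every sequence $\langle U_\beta:\beta<\alpha\rangle$ of $\tau_{\mathcal{I}}$-open sets is $\tau_{\mathcal{I}}$-open if and only if $\alpha<\kappa$. Consequently, the family of $\tau_{\mathcal{I}}$-clopen subsets of ${}^{\kappa}\nu$ is closed under complements and under unions of fewer than $\kappa$ sets. (3) For every $x\in{}^{\kappa}\nu$, every $\tau_{\mathcal{I}}$-open neighborhood basis of $x$ has size at least $\kappa$. Moreover, every point has a $\tau_{\mathcal{I}}$-open neighborhood basis of size $\kappa$ if and only if $\mathcal{I}$ has a basis of size $\kappa$. If moreover $\mathcal{I}$ contains an unbounded subset of $\kappa$, then: (4) $\tau_{\mathcal{I}}$ is neither compact nor $\kappa$-compact; (5) $\tau_{\mathcal{I}}$ has weight $2^\kappa$, and $|\tau_{\mathcal{I}}|=2^{2^\kappa}$; (6) $\tau_{\mathcal{I}}$ has density character $2^\kappa$.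
   Context: ${}^{\kappa}\nu$ is the set of functions $\kappa\to\nu$. For $f\colon D\to\nu$ with $D\in\mathcal{I}$, $\mathbf{N}_f=\{x\in{}^{\kappa}\nu:f\subseteq x\}$; $\tau_{\mathcal{I}}$ is the topology generated by these sets. A basis for $\mathcal{I}$ is a family $\mathcal{B}\subseteq\mathcal{I}$ such that each member of $\mathcal{I}$ is contained in a member of $\mathcal{B}$. A space is $\kappa$-compact if every open cover has a subcover of size less than $\kappa$. Weight is the least size of an open basis; density character is the least size of a dense subset. *)

theory Defs
  imports "HOL-Analysis.Analysis"
begin

unbundle cardinal_syntax

text \<open>Cardinals are represented as in Main's BNF cardinal library: a cardinal
  \<open>\<kappa>\<close> is a cardinal order \<open>r\<close> on its field; \<open>|A|\<close> is the cardinal of \<open>A\<close>,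
  \<open><o\<close>, \<open>\<le>o\<close>, \<open>=o\<close> compare cardinals/ordinals.\<close>

definition kbounded :: "'a rel \<Rightarrow> 'a set \<Rightarrow> bool" where
  "kbounded r A \<equiv> \<exists>\<beta>\<in>Field r. \<forall>\<alpha>\<in>A. (\<alpha>, \<beta>) \<in> r"

definition kcomplete_proper_ideal :: "'a rel \<Rightarrow> 'a set set \<Rightarrow> bool" where
  "kcomplete_proper_ideal r I \<equiv>
     (\<forall>A\<in>I. A \<subseteq> Field r) \<and> {} \<in> I \<and>
     (\<forall>A\<in>I. \<forall>B. B \<subseteq> A \<longrightarrow> B \<in> I) \<and>
     (\<forall>A\<in>I. \<forall>B\<in>I. A \<union> B \<in> I) \<and>
     (\<forall>F. F \<subseteq> I \<and> |F| <o r \<longrightarrow> \<Union>F \<in> I) \<and>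
     Field r \<notin> I"

text \<open>The space \<open>\<^sup>\<kappa>\<nu>\<close>: functions \<open>\<kappa> \<rightarrow> V\<close>, with \<open>\<kappa> = UNIV\<close>.\<close>
definition fspace :: "'b set \<Rightarrow> ('a \<Rightarrow> 'b) set" where
  "fspace V = {x. \<forall>i. x i \<in> V}"

text \<open>The sets \<open>N_f\<close> for \<open>f : D \<rightarrow> V\<close>, \<open>D \<in> I\<close> (f given by a total function
  whose values outside \<open>D\<close> are irrelevant).\<close>
definition Nset :: "'b set \<Rightarrow> 'a set \<Rightarrow> ('a \<Rightarrow> 'b) \<Rightarrow> ('a \<Rightarrow> 'b) set" where
  "Nset V D f = {x \<in> fspace V. \<forall>i\<in>D. x i = f i}"

definition tauI :: "'a set set \<Rightarrow> 'b set \<Rightarrow> ('a \<Rightarrow> 'b) topology" where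
  "tauI I V = topology_generated_by
      {Nset V D f | D f. D \<in> I \<and> (\<forall>i\<in>D. f i \<in> V)}"

definition no_isolated_points :: "'a topology \<Rightarrow> bool" where
  "no_isolated_points T \<equiv> \<forall>x\<in>topspace T. \<not> openin T {x}"

definition clopenin :: "'a topology \<Rightarrow> 'a set \<Rightarrow> bool" where
  "clopenin T U \<equiv> openin T U \<and> closedin T U"

definition open_basis :: "'a topology \<Rightarrow> 'a set set \<Rightarrow> bool" where
  "open_basis T B \<equiv> (\<forall>U\<in>B. openin T U) \<and> (\<forall>W. openin T W \<longrightarrow> (\<exists>C\<subseteq>B. \<Union>C = W))"

definition zero_dim :: "'a topology \<Rightarrow> bool" where
  "zero_dim T \<equiv> \<exists>B. open_basis T B \<and> (\<forall>U\<in>B. clopenin T U)"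

definition open_nbhd_basis :: "'a topology \<Rightarrow> 'a \<Rightarrow> 'a set set \<Rightarrow> bool" where
  "open_nbhd_basis T x B \<equiv> (\<forall>U\<in>B. openin T U \<and> x \<in> U) \<and>
     (\<forall>W. openin T W \<and> x \<in> W \<longrightarrow> (\<exists>U\<in>B. U \<subseteq> W))"

definition ideal_basis :: "'a set set \<Rightarrow> 'a set set \<Rightarrow> bool" where
  "ideal_basis I B \<equiv> B \<subseteq> I \<and> (\<forall>A\<in>I. \<exists>C\<in>B. A \<subseteq> C)"

definition kappa_compact :: "'k rel \<Rightarrow> 'a topology \<Rightarrow> bool" where
  "kappa_compact r T \<equiv> \<forall>\<U>. (\<forall>U\<in>\<U>. openin T U) \<and> topspace T \<subseteq> \<Union>\<U> \<longrightarrow>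
      (\<exists>\<V>\<subseteq>\<U>. card_of \<V> <o r \<and> topspace T \<subseteq> \<Union>\<V>)"

definition weight_is :: "'a topology \<Rightarrow> 'c rel \<Rightarrow> bool" where
  "weight_is T c \<equiv> (\<exists>B. open_basis T B \<and> |B| =o c) \<and> (\<forall>B. open_basis T B \<longrightarrow> c \<le>o card_of B)"

definition density_is :: "'a topology \<Rightarrow> 'c rel \<Rightarrow> bool" where
  "density_is T c \<equiv>
     (\<exists>D. D \<subseteq> topspace T \<and> T closure_of D = topspace T \<and> |D| =o c) \<and>
     (\<forall>D. D \<subseteq> topspace T \<and> T closure_of D = topspace T \<longrightarrow> c \<le>o card_of D)"

end

theory Submission
  imports Defs
begin

lemma Pow_mono_card: "|X| \<le>o |Y| \<Longrightarrow> |Pow X| \<le>o |Pow Y|"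
proof -
  assume "|X| \<le>o |Y|"
  then obtain f where f: "inj_on f X" "f ` X \<subseteq> Y" using card_of_ordLeq[of X Y] by blast
  show "|Pow X| \<le>o |Pow Y|"
  proof (rule card_of_ordLeqI[of "image f"])
    show "inj_on (image f) (Pow X)" using f(1) by (rule inj_on_image_Pow)
    show "\<And>a. a \<in> Pow X \<Longrightarrow> f ` a \<in> Pow Y" using f(2) by blast
  qed
qed

lemma Pow_cong_card: "|X| =o |Y| \<Longrightarrow> |Pow X| =o |Pow Y|"
  by (simp add: ordIso_iff_ordLeq Pow_mono_card)

locale setting =
  fixes r :: "'a rel" and I :: "'a set set" and V :: "'a set"
  assumes kappa_card: "Card_order r" and kappa_field: "Field r = UNIV"
    and kappa_regular: "regularCard r"
    and kappa_uncountable: "natLeq <o r"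
    and ideal: "kcomplete_proper_ideal r I"
    and bounded_in: "\<And>A. kbounded r A \<Longrightarrow> A \<in> I"
    and nu: "V = UNIV \<or> card V = 2"
begin

lemma I_sub: "A \<in> I \<Longrightarrow> B \<subseteq> A \<Longrightarrow> B \<in> I"
  using ideal unfolding kcomplete_proper_ideal_def by blast

lemma I_Un: "A \<in> I \<Longrightarrow> B \<in> I \<Longrightarrow> A \<union> B \<in> I"
  using ideal unfolding kcomplete_proper_ideal_def by blast

lemma I_empty: "{} \<in> I"
  using ideal unfolding kcomplete_proper_ideal_def by blast

lemma I_UNIV: "UNIV \<notin> I"
  using ideal kappa_field unfolding kcomplete_proper_ideal_def by auto

lemma I_Union: "F \<subseteq> I \<Longrightarrow> |F| <o r \<Longrightarrow> \<Union>F \<in> I"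
  using ideal unfolding kcomplete_proper_ideal_def by blast

lemma I_single: "{i} \<in> I"
proof -
  have "well_order_on (Field r) r" using kappa_card by (rule card_order_on_well_order_on)
  then have "refl_on (Field r) r"
    unfolding well_order_on_def linear_order_on_def partial_order_on_def preorder_on_def by blast
  then have "(i,i) \<in> r" using kappa_field by (simp add: refl_on_def)
  then have "kbounded r {i}" unfolding kbounded_def using kappa_field by auto
  then show ?thesis by (rule bounded_in)
qed

lemma UNIV_r: "|UNIV :: 'a set| =o r"
  using card_of_Field_ordIso[OF kappa_card] kappa_field by simp

lemma infinite_UNIV: "infinite (UNIV :: 'a set)"
proof -
  have "natLeq \<le>o |UNIV :: 'a set|"
    using kappa_uncountable UNIV_r ordIso_symmetric ordLess_imp_ordLeq ordLeq_ordIso_trans by blast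
  then show ?thesis using infinite_iff_natLeq_ordLeq by blast
qed

lemma V_two: "a \<in> V \<Longrightarrow> \<exists>b\<in>V. b \<noteq> a"
proof -
  assume a: "a \<in> V"
  show ?thesis
  proof (cases "V = UNIV")
    case True
    have "UNIV - {a} \<noteq> {}" using infinite_UNIV finite_subset[of UNIV "{a}"] by auto
    then show ?thesis using True by auto
  next
    case False
    then have "card V = 2" using nu by auto
    then obtain x y where "V = {x, y}" "x \<noteq> y" by (auto simp: card_2_iff)
    then show ?thesis using a by auto
  qed
qed

lemma V_ne: "\<exists>v. v \<in> V"
proof (cases "V = UNIV")
  case False
  then have "card V = 2" using nu by auto
  then obtain x y where "V = {x, y}" by (auto simp: card_2_iff)
  then show ?thesis by auto
qed auto

abbreviation "T \<equiv> tauI I V"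

lemma Nset_self: "x \<in> fspace V \<Longrightarrow> x \<in> Nset V D x"
  unfolding Nset_def by auto

lemma Nset_sub_fspace: "Nset V D f \<subseteq> fspace V"
  unfolding Nset_def by auto

lemma Nset_mono: "D \<subseteq> E \<Longrightarrow> Nset V E f \<subseteq> Nset V D f"
  unfolding Nset_def by auto

lemma Nset_eq: "x \<in> Nset V D f \<Longrightarrow> Nset V D x = Nset V D f"
  unfolding Nset_def by auto

lemma fspace_upd: "x \<in> fspace V \<Longrightarrow> v \<in> V \<Longrightarrow> x(i := v) \<in> fspace V"
  unfolding fspace_def by auto

lemma Nset_sub_iff:
  assumes "x \<in> fspace V" "Nset V D x \<subseteq> Nset V A x"
  shows "A \<subseteq> D"
proof
  fix i assume iA: "i \<in> A"
  show "i \<in> D"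
  proof (rule ccontr)
    assume iD: "i \<notin> D"
    have "x i \<in> V" using assms(1) unfolding fspace_def by auto
    then obtain v where v: "v \<in> V" "v \<noteq> x i" using V_two by blast
    have "x(i := v) \<in> Nset V D x" using iD fspace_upd[OF assms(1) v(1)] unfolding Nset_def by auto
    then have "x(i := v) \<in> Nset V A x" using assms(2) by auto
    then show False using iA v unfolding Nset_def by auto
  qed
qed

lemma openT_iff:
  "openin T U \<longleftrightarrow> U \<subseteq> fspace V \<and> (\<forall>x\<in>U. \<exists>D\<in>I. Nset V D x \<subseteq> U)"
proof
  assume "openin T U"
  then have "generate_topology_on {Nset V D f | D f. D \<in> I \<and> (\<forall>i\<in>D. f i \<in> V)} U"
    unfolding tauI_def by (rule openin_topology_generated_by)
  then show "U \<subseteq> fspace V \<and> (\<forall>x\<in>U. \<exists>D\<in>I. Nset V D x \<subseteq> U)"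
  proof induction
    case Empty
    then show ?case by auto
  next
    case (Int a b)
    show ?case
    proof (intro conjI ballI)
      show "a \<inter> b \<subseteq> fspace V" using Int by auto
      fix x assume "x \<in> a \<inter> b"
      then obtain D1 D2 where "D1 \<in> I" "D2 \<in> I" "Nset V D1 x \<subseteq> a" "Nset V D2 x \<subseteq> b"
        using Int by blast
      then show "\<exists>D\<in>I. Nset V D x \<subseteq> a \<inter> b"
        proof (intro bexI)
        show "D1 \<union> D2 \<in> I" using \<open>D1 \<in> I\<close> \<open>D2 \<in> I\<close> by (rule I_Un)
        have "Nset V (D1 \<union> D2) x \<subseteq> Nset V D1 x" "Nset V (D1 \<union> D2) x \<subseteq> Nset V D2 x"
          by (rule Nset_mono, blast)+
        then show "Nset V (D1 \<union> D2) x \<subseteq> a \<inter> b"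
          using \<open>Nset V D1 x \<subseteq> a\<close> \<open>Nset V D2 x \<subseteq> b\<close> by blast
      qed
    qed
  next
    case (UN K)
    show ?case
    proof (intro conjI ballI)
      show "\<Union>K \<subseteq> fspace V" using UN by blast
      fix x assume "x \<in> \<Union>K"
      then obtain k where "k \<in> K" "x \<in> k" by auto
      then obtain D where "D \<in> I" "Nset V D x \<subseteq> k" using UN by blast
      then show "\<exists>D\<in>I. Nset V D x \<subseteq> \<Union>K" using \<open>k \<in> K\<close> by blast
    qed
  next
    case (Basis s)
    then obtain D f where s: "s = Nset V D f" "D \<in> I" by blast
    show ?case
    proof (intro conjI ballI)
      show "s \<subseteq> fspace V" using s Nset_sub_fspace by auto
      fix x assume "x \<in> s"
      then show "\<exists>D\<in>I. Nset V D x \<subseteq> s" using s Nset_eq by blast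
    qed
  qed
next
  assume A: "U \<subseteq> fspace V \<and> (\<forall>x\<in>U. \<exists>D\<in>I. Nset V D x \<subseteq> U)"
  then obtain Dx where Dx: "\<And>x. x \<in> U \<Longrightarrow> Dx x \<in> I \<and> Nset V (Dx x) x \<subseteq> U" by metis
  have U: "U = (\<Union>x\<in>U. Nset V (Dx x) x)"
    using Dx A Nset_self by blast
  have "generate_topology_on {Nset V D f | D f. D \<in> I \<and> (\<forall>i\<in>D. f i \<in> V)} (\<Union>x\<in>U. Nset V (Dx x) x)"
  proof (rule generate_topology_on.UN)
    fix k assume "k \<in> (\<lambda>x. Nset V (Dx x) x) ` U"
    then obtain x where x: "x \<in> U" "k = Nset V (Dx x) x" by auto
    then have "x \<in> fspace V" using A by auto
    then show "generate_topology_on {Nset V D f | D f. D \<in> I \<and> (\<forall>i\<in>D. f i \<in> V)} k"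
      using x Dx unfolding fspace_def by (intro generate_topology_on.Basis) blast
  qed
  then have G: "openin (topology_generated_by {Nset V D f | D f. D \<in> I \<and> (\<forall>i\<in>D. f i \<in> V)}) (\<Union>x\<in>U. Nset V (Dx x) x)"
    by (simp only: openin_topology_generated_by_iff)
  show "openin T U" unfolding tauI_def by (subst U) (rule G)
qed

lemma openT_Nset: assumes "D \<in> I" shows "openin T (Nset V D x)"
  unfolding openT_iff
proof (intro conjI ballI Nset_sub_fspace)
  fix y assume "y \<in> Nset V D x"
  then show "\<exists>E\<in>I. Nset V E y \<subseteq> Nset V D x" using Nset_eq[of y D x] assms by auto
qed

lemma topspaceT: "topspace T = fspace V"
proof -
  have "topspace T = \<Union>{Nset V D f | D f. D \<in> I \<and> (\<forall>i\<in>D. f i \<in> V)}"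
    unfolding tauI_def by (rule topology_generated_by_topspace)
  also have "\<dots> = fspace V"
  proof
    show "\<Union>{Nset V D f | D f. D \<in> I \<and> (\<forall>i\<in>D. f i \<in> V)} \<subseteq> fspace V"
      using Nset_sub_fspace by blast
    show "fspace V \<subseteq> \<Union>{Nset V D f | D f. D \<in> I \<and> (\<forall>i\<in>D. f i \<in> V)}"
    proof
      fix x :: "'a \<Rightarrow> 'a" assume x: "x \<in> fspace V"
      then have "x \<in> Nset V {} x" by (rule Nset_self)
      then show "x \<in> \<Union>{Nset V D f | D f. D \<in> I \<and> (\<forall>i\<in>D. f i \<in> V)}"
        using I_empty by blast
    qed
  qed
  finally show ?thesis .
qed

lemma closedT_Nset: assumes x: "x \<in> fspace V" and D: "D \<in> I" shows "closedin T (Nset V D x)"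
  unfolding closedin_def topspaceT
proof (intro conjI Nset_sub_fspace)
  show "openin T (fspace V - Nset V D x)" unfolding openT_iff
  proof (intro conjI ballI)
    show "fspace V - Nset V D x \<subseteq> fspace V" by blast
    fix y assume y: "y \<in> fspace V - Nset V D x"
    then obtain i where i: "i \<in> D" "y i \<noteq> x i" unfolding Nset_def by auto
    have "Nset V {i} y \<subseteq> fspace V - Nset V D x"
    proof
      fix z assume "z \<in> Nset V {i} y"
      then have z: "z \<in> fspace V" "z i = y i" unfolding Nset_def by auto
      then have "z i \<noteq> x i" using i by simp
      then show "z \<in> fspace V - Nset V D x" using i(1) z(1) unfolding Nset_def by blast
    qed
    then show "\<exists>E\<in>I. Nset V E y \<subseteq> fspace V - Nset V D x" using I_single by blast
  qed
qed

lemma closedT_iff: "closedin T C \<longleftrightarrow> C \<subseteq> fspace V \<and> openin T (fspace V - C)"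
  unfolding closedin_def topspaceT by simp

lemma small_Inter:
  assumes G: "\<forall>U\<in>G. openin T U" and card: "|G| <o r"
  shows "openin T (fspace V \<inter> \<Inter>G)"
  unfolding openT_iff
proof (intro conjI ballI)
  show "fspace V \<inter> \<Inter>G \<subseteq> fspace V" by blast
  fix x assume x: "x \<in> fspace V \<inter> \<Inter>G"
  have "\<forall>U\<in>G. \<exists>D\<in>I. Nset V D x \<subseteq> U"
    using G x unfolding openT_iff by blast
  then obtain D where D: "\<And>U. U \<in> G \<Longrightarrow> D U \<in> I \<and> Nset V (D U) x \<subseteq> U" by metis
  have "|D ` G| \<le>o |G|" by (rule card_of_image)
  then have "|D ` G| <o r" using card by (rule ordLeq_ordLess_trans)
  moreover have "D ` G \<subseteq> I" using D by blast
  ultimately have E: "\<Union>(D ` G) \<in> I" using I_Union by blast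
  have "Nset V (\<Union>(D ` G)) x \<subseteq> fspace V \<inter> \<Inter>G"
  proof
    fix y assume y: "y \<in> Nset V (\<Union>(D ` G)) x"
    have "y \<in> fspace V" using y Nset_sub_fspace by blast
    moreover have "y \<in> U" if "U \<in> G" for U
    proof -
      have "Nset V (\<Union>(D ` G)) x \<subseteq> Nset V (D U) x" by (rule Nset_mono) (use that in blast)
      then show ?thesis using D[OF that] y by blast
    qed
    ultimately show "y \<in> fspace V \<inter> \<Inter>G" by blast
  qed
  then show "\<exists>D\<in>I. Nset V D x \<subseteq> fspace V \<inter> \<Inter>G" using E by blast
qed

lemma not_open_single:
  assumes x: "x \<in> fspace V" shows "\<not> openin T {x}"
proof
  assume "openin T {x}"
  then obtain D where D: "D \<in> I" "Nset V D x \<subseteq> {x}" unfolding openT_iff by blast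
  have "D \<noteq> UNIV" using D I_UNIV by auto
  then obtain i where i: "i \<notin> D" by auto
  have "x i \<in> V" using x unfolding fspace_def by auto
  then obtain v where v: "v \<in> V" "v \<noteq> x i" using V_two by blast
  have "x(i := v) \<in> Nset V D x" using i fspace_upd[OF x v(1)] unfolding Nset_def by auto
  then have "x(i := v) = x" using D by blast
  then show False using v by (metis fun_upd_same)
qed

lemma part1: "no_isolated_points T \<and> regular_space T \<and> Hausdorff_space T \<and> zero_dim T"
proof (intro conjI)
  show "no_isolated_points T" unfolding no_isolated_points_def topspaceT
    using not_open_single by blast
  show "Hausdorff_space T" unfolding Hausdorff_space_def topspaceT
  proof (intro allI impI)
    fix x y :: "'a \<Rightarrow> 'a" assume xy: "x \<in> fspace V \<and> y \<in> fspace V \<and> x \<noteq> y"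
    then obtain i where i: "x i \<noteq> y i" by auto
    have "openin T (Nset V {i} x)" "openin T (Nset V {i} y)" using I_single by (auto intro: openT_Nset)
    moreover have "x \<in> Nset V {i} x" "y \<in> Nset V {i} y" using xy by (auto intro: Nset_self)
    moreover have "disjnt (Nset V {i} x) (Nset V {i} y)" using i unfolding disjnt_def Nset_def by auto
    ultimately show "\<exists>U W. openin T U \<and> openin T W \<and> x \<in> U \<and> y \<in> W \<and> disjnt U W" by blast
  qed
  show "regular_space T" unfolding regular_space_def topspaceT
  proof (intro allI impI)
    fix C and a :: "'a \<Rightarrow> 'a" assume Ca: "closedin T C \<and> a \<in> fspace V - C"
    then have "openin T (fspace V - C)" "C \<subseteq> fspace V" unfolding closedT_iff by auto
    then obtain D where D: "D \<in> I" "Nset V D a \<subseteq> fspace V - C" using Ca unfolding openT_iff by blast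
    have "openin T (Nset V D a)" using D(1) by (rule openT_Nset)
    moreover have "openin T (fspace V - Nset V D a)"
      using closedT_Nset[of a D] Ca D unfolding closedT_iff by blast
    moreover have "a \<in> Nset V D a" using Ca by (auto intro: Nset_self)
    moreover have "C \<subseteq> fspace V - Nset V D a" using D \<open>C \<subseteq> fspace V\<close> by blast
    moreover have "disjnt (Nset V D a) (fspace V - Nset V D a)" unfolding disjnt_def by blast
    ultimately show "\<exists>U W. openin T U \<and> openin T W \<and> a \<in> U \<and> C \<subseteq> W \<and> disjnt U W" by blast
  qed
  show "zero_dim T" unfolding zero_dim_def
  proof (intro exI conjI)
    let ?B = "{Nset V D x | D x. D \<in> I \<and> x \<in> fspace V}"
    show "\<forall>U\<in>?B. clopenin T U" unfolding clopenin_def using openT_Nset closedT_Nset by blast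
    show "open_basis T ?B" unfolding open_basis_def
    proof (intro conjI allI impI ballI)
      fix U assume "U \<in> ?B" then show "openin T U" using openT_Nset by blast
    next
      fix W assume W: "openin T W"
      show "\<exists>C\<subseteq>?B. \<Union>C = W"
      proof (intro exI conjI)
        show "{U \<in> ?B. U \<subseteq> W} \<subseteq> ?B" by blast
        show "\<Union>{U \<in> ?B. U \<subseteq> W} = W"
        proof
          show "\<Union>{U \<in> ?B. U \<subseteq> W} \<subseteq> W" by blast
          show "W \<subseteq> \<Union>{U \<in> ?B. U \<subseteq> W}"
          proof
            fix x assume x: "x \<in> W"
            then obtain D where D: "D \<in> I" "Nset V D x \<subseteq> W" using W unfolding openT_iff by blast
            have xf: "x \<in> fspace V" using x W unfolding openT_iff by blast
            then have "Nset V D x \<in> {U \<in> ?B. U \<subseteq> W}" using D by blast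
            moreover have "x \<in> Nset V D x" using xf by (rule Nset_self)
            ultimately show "x \<in> \<Union>{U \<in> ?B. U \<subseteq> W}" by blast
          qed
        qed
      qed
    qed
  qed
qed

lemma r_WO: "Well_order r"
  using kappa_card by (rule card_order_on_well_order_on)

lemma part2:
  fixes s :: "'c rel"
  assumes ws: "Well_order s"
  shows "(\<forall>U. (\<forall>\<beta>\<in>Field s. openin T (U \<beta>)) \<longrightarrow>
              openin T (topspace T \<inter> (\<Inter>\<beta>\<in>Field s. U \<beta>))) \<longleftrightarrow> s <o r"
proof
  assume H: "\<forall>U. (\<forall>\<beta>\<in>Field s. openin T (U \<beta>)) \<longrightarrow>
              openin T (topspace T \<inter> (\<Inter>\<beta>\<in>Field s. U \<beta>))"
  show "s <o r"
  proof (rule ccontr)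
    assume "\<not> s <o r"
    then have "r \<le>o s" using not_ordLess_iff_ordLeq[OF r_WO ws] by blast
    then have "|Field r| \<le>o |Field s|" by (rule card_of_mono2)
    then have "|UNIV :: 'a set| \<le>o |Field s|" using kappa_field by simp
    then obtain f where f: "inj_on f (UNIV :: 'a set)" "f ` UNIV \<subseteq> Field s"
      using card_of_ordLeq[of "UNIV :: 'a set" "Field s"] by blast
    obtain v where v: "v \<in> V" using V_ne by blast
    define x0 :: "'a \<Rightarrow> 'a" where "x0 = (\<lambda>_. v)"
    have x0: "x0 \<in> fspace V" unfolding x0_def fspace_def using v by auto
    define U where "U = (\<lambda>\<beta>. Nset V {j. f j = \<beta>} x0)"
    have "\<forall>\<beta>\<in>Field s. openin T (U \<beta>)"
    proof
      fix \<beta>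
      have "{j. f j = \<beta>} \<in> I"
      proof (cases "\<exists>j. f j = \<beta>")
        case True
        then obtain j where j: "f j = \<beta>" by blast
        have "{j. f j = \<beta>} = {j}"
        proof (intro set_eqI iffI)
          fix k assume "k \<in> {j. f j = \<beta>}"
          then have "f k = f j" using j by simp
          then show "k \<in> {j}" using f(1) by (simp add: inj_on_def)
        qed (use j in simp)
        then show ?thesis using I_single by simp
      next
        case False
        then show ?thesis using I_empty by simp
      qed
      then show "openin T (U \<beta>)" unfolding U_def by (rule openT_Nset)
    qed
    then have op: "openin T (topspace T \<inter> (\<Inter>\<beta>\<in>Field s. U \<beta>))" using H by blast
    have "topspace T \<inter> (\<Inter>\<beta>\<in>Field s. U \<beta>) = {x0}"
    proof
      have "x0 \<in> U \<beta>" for \<beta> unfolding U_def by (rule Nset_self[OF x0])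
      then show "{x0} \<subseteq> topspace T \<inter> (\<Inter>\<beta>\<in>Field s. U \<beta>)"
        using x0 unfolding topspaceT by blast
      show "topspace T \<inter> (\<Inter>\<beta>\<in>Field s. U \<beta>) \<subseteq> {x0}"
      proof
        fix y assume y: "y \<in> topspace T \<inter> (\<Inter>\<beta>\<in>Field s. U \<beta>)"
        have "y j = x0 j" for j
        proof -
          have "f j \<in> Field s" using f(2) by blast
          then have "y \<in> U (f j)" using y by blast
          then show ?thesis unfolding U_def Nset_def by auto
        qed
        then show "y \<in> {x0}" by auto
      qed
    qed
    then show False using op not_open_single[OF x0] by simp
  qed
next
  assume sr: "s <o r"
  show "\<forall>U. (\<forall>\<beta>\<in>Field s. openin T (U \<beta>)) \<longrightarrow>
              openin T (topspace T \<inter> (\<Inter>\<beta>\<in>Field s. U \<beta>))"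
  proof (intro allI impI)
    fix U assume U: "\<forall>\<beta>\<in>Field s. openin T (U \<beta>)"
    have "|U ` Field s| \<le>o |Field s|" by (rule card_of_image)
    moreover have "|Field s| \<le>o s" using ws by (rule card_of_least)
    ultimately have "|U ` Field s| \<le>o s" by (rule ordLeq_transitive)
    then have "|U ` Field s| <o r" using sr by (rule ordLeq_ordLess_trans)
    then have "openin T (fspace V \<inter> \<Inter>(U ` Field s))" using U small_Inter by blast
    then show "openin T (topspace T \<inter> (\<Inter>\<beta>\<in>Field s. U \<beta>))" unfolding topspaceT by simp
  qed
qed

lemma part2b:
  "(\<forall>C. clopenin T C \<longrightarrow> clopenin T (topspace T - C)) \<and>
      (\<forall>F. (\<forall>C\<in>F. clopenin T C) \<and> |F| <o r \<longrightarrow> clopenin T (\<Union>F))"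
proof (intro conjI allI impI)
  fix C assume C: "clopenin T C"
  have "openin T (topspace T - C)"
    using openin_diff[OF openin_topspace] C unfolding clopenin_def by blast
  moreover have "closedin T (topspace T - C)"
    using closedin_diff[OF closedin_topspace] C unfolding clopenin_def by blast
  ultimately show "clopenin T (topspace T - C)" unfolding clopenin_def by blast
next
  fix F assume F: "(\<forall>C\<in>F. clopenin T C) \<and> |F| <o r"
  have op: "openin T (\<Union>F)" using F unfolding clopenin_def by auto
  have "|(\<lambda>C. topspace T - C) ` F| \<le>o |F|" by (rule card_of_image)
  then have "|(\<lambda>C. topspace T - C) ` F| <o r" using F ordLeq_ordLess_trans by blast
  moreover have "\<forall>U\<in>(\<lambda>C. topspace T - C) ` F. openin T U" using F unfolding clopenin_def by auto
  ultimately have "openin T (fspace V \<inter> \<Inter>((\<lambda>C. topspace T - C) ` F))" using small_Inter by blast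
  moreover have "fspace V \<inter> \<Inter>((\<lambda>C. topspace T - C) ` F) = topspace T - \<Union>F"
    unfolding topspaceT by blast
  ultimately have "openin T (topspace T - \<Union>F)" by simp
  moreover have "\<Union>F \<subseteq> topspace T" using op by (rule openin_subset)
  ultimately have "closedin T (\<Union>F)" unfolding closedin_def by blast
  then show "clopenin T (\<Union>F)" using op unfolding clopenin_def by blast
qed

lemma nbhd_lower:
  assumes x: "x \<in> fspace V" and B: "open_nbhd_basis T x B"
  shows "r \<le>o |B|"
proof (rule ccontr)
  assume "\<not> r \<le>o |B|"
  then have Br: "|B| <o r" using not_ordLeq_iff_ordLess[OF card_of_Well_order r_WO] by blast
  have "\<forall>U\<in>B. \<exists>D\<in>I. Nset V D x \<subseteq> U" using B unfolding open_nbhd_basis_def openT_iff by blast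
  then obtain DU where DU: "\<And>U. U \<in> B \<Longrightarrow> DU U \<in> I \<and> Nset V (DU U) x \<subseteq> U" by metis
  have "|DU ` B| \<le>o |B|" by (rule card_of_image)
  then have "|DU ` B| <o r" using Br by (rule ordLeq_ordLess_trans)
  moreover have "DU ` B \<subseteq> I" using DU by blast
  ultimately have E: "\<Union>(DU ` B) \<in> I" using I_Union by blast
  then have "\<Union>(DU ` B) \<noteq> UNIV" using I_UNIV by auto
  then obtain i where i: "i \<notin> \<Union>(DU ` B)" by auto
  have EI: "insert i (\<Union>(DU ` B)) \<in> I" using I_Un[OF I_single E] by simp
  have "openin T (Nset V (insert i (\<Union>(DU ` B))) x) \<and> x \<in> Nset V (insert i (\<Union>(DU ` B))) x"
    using openT_Nset[OF EI] Nset_self[OF x] by blast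
  then obtain U where U: "U \<in> B" "U \<subseteq> Nset V (insert i (\<Union>(DU ` B))) x"
    using B unfolding open_nbhd_basis_def by blast
  then have "Nset V (DU U) x \<subseteq> Nset V (insert i (\<Union>(DU ` B))) x" using DU by blast
  then have "insert i (\<Union>(DU ` B)) \<subseteq> DU U" by (rule Nset_sub_iff[OF x])
  then show False using i U(1) by blast
qed

lemma part3:
  "(\<forall>x\<in>topspace T. \<exists>B. open_nbhd_basis T x B \<and> |B| =o r)
       \<longleftrightarrow> (\<exists>B. ideal_basis I B \<and> |B| =o r)"
proof
  assume H: "\<forall>x\<in>topspace T. \<exists>B. open_nbhd_basis T x B \<and> |B| =o r"
  obtain v where v: "v \<in> V" using V_ne by blast
  define x0 :: "'a \<Rightarrow> 'a" where "x0 = (\<lambda>_. v)"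
  have x0: "x0 \<in> fspace V" unfolding x0_def fspace_def using v by auto
  then obtain NB where NB: "open_nbhd_basis T x0 NB" "|NB| =o r" using H topspaceT by auto
  have "\<forall>U\<in>NB. \<exists>D\<in>I. Nset V D x0 \<subseteq> U" using NB(1) unfolding open_nbhd_basis_def openT_iff by blast
  then obtain DU where DU: "\<And>U. U \<in> NB \<Longrightarrow> DU U \<in> I \<and> Nset V (DU U) x0 \<subseteq> U" by metis
  have ib: "ideal_basis I (DU ` NB)" unfolding ideal_basis_def
  proof (intro conjI ballI)
    show "DU ` NB \<subseteq> I" using DU by blast
    fix A assume A: "A \<in> I"
    have "openin T (Nset V A x0) \<and> x0 \<in> Nset V A x0" using openT_Nset[OF A] Nset_self[OF x0] by blast
    then obtain U where U: "U \<in> NB" "U \<subseteq> Nset V A x0" using NB(1) unfolding open_nbhd_basis_def by blast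
    then have "Nset V (DU U) x0 \<subseteq> Nset V A x0" using DU by blast
    then have "A \<subseteq> DU U" by (rule Nset_sub_iff[OF x0])
    then show "\<exists>C\<in>DU ` NB. A \<subseteq> C" using U(1) by blast
  qed
  have le: "|DU ` NB| \<le>o r" using card_of_image NB(2) by (rule ordLeq_ordIso_trans)
  have ge: "r \<le>o |DU ` NB|"
  proof (rule ccontr)
    assume "\<not> r \<le>o |DU ` NB|"
    then have "|DU ` NB| <o r" using not_ordLeq_iff_ordLess[OF card_of_Well_order r_WO] by blast
    moreover have "DU ` NB \<subseteq> I" using ib unfolding ideal_basis_def by blast
    ultimately have "\<Union>(DU ` NB) \<in> I" using I_Union by blast
    moreover have "\<Union>(DU ` NB) = UNIV"
    proof -
      have "i \<in> \<Union>(DU ` NB)" for i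
      proof -
        obtain C where "C \<in> DU ` NB" "{i} \<subseteq> C" using ib I_single[of i] unfolding ideal_basis_def by meson
        then show ?thesis by blast
      qed
      then show ?thesis by blast
    qed
    ultimately show False using I_UNIV by simp
  qed
  have "|DU ` NB| =o r" using le ge by (simp add: ordIso_iff_ordLeq)
  then show "\<exists>B. ideal_basis I B \<and> |B| =o r" using ib by blast
next
  assume "\<exists>B. ideal_basis I B \<and> |B| =o r"
  then obtain IB where IB: "ideal_basis I IB" "|IB| =o r" by blast
  show "\<forall>x\<in>topspace T. \<exists>B. open_nbhd_basis T x B \<and> |B| =o r"
  proof
    fix x assume "x \<in> topspace T"
    then have x: "x \<in> fspace V" using topspaceT by simp
    have nb: "open_nbhd_basis T x ((\<lambda>D. Nset V D x) ` IB)" unfolding open_nbhd_basis_def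
    proof (intro conjI ballI allI impI)
      fix U assume "U \<in> (\<lambda>D. Nset V D x) ` IB"
      then obtain D where D: "D \<in> IB" "U = Nset V D x" by blast
      then have "D \<in> I" using IB(1) unfolding ideal_basis_def by blast
      then show "openin T U" using D(2) openT_Nset by simp
    next
      fix U assume "U \<in> (\<lambda>D. Nset V D x) ` IB"
      then show "x \<in> U" using Nset_self[OF x] by blast
    next
      fix W assume W: "openin T W \<and> x \<in> W"
      then obtain A where A: "A \<in> I" "Nset V A x \<subseteq> W" unfolding openT_iff by blast
      then obtain C where C: "C \<in> IB" "A \<subseteq> C" using IB(1) unfolding ideal_basis_def by blast
      then have "Nset V C x \<subseteq> W" using A Nset_mono[of A C x] by blast
      then show "\<exists>U\<in>(\<lambda>D. Nset V D x) ` IB. U \<subseteq> W" using C by blast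
    qed
    have le: "|(\<lambda>D. Nset V D x) ` IB| \<le>o r" using card_of_image IB(2) by (rule ordLeq_ordIso_trans)
    have ge: "r \<le>o |(\<lambda>D. Nset V D x) ` IB|" using nbhd_lower[OF x nb] .
    have "|(\<lambda>D. Nset V D x) ` IB| =o r" using le ge by (simp add: ordIso_iff_ordLeq)
    then show "\<exists>B. open_nbhd_basis T x B \<and> |B| =o r" using nb by blast
  qed
qed

lemma B0_union:
  assumes W: "openin T W"
  shows "W = \<Union>{b \<in> {Nset V D x | D x. D \<in> I \<and> x \<in> fspace V}. b \<subseteq> W}"
proof
  show "\<Union>{b \<in> {Nset V D x | D x. D \<in> I \<and> x \<in> fspace V}. b \<subseteq> W} \<subseteq> W" by blast
  show "W \<subseteq> \<Union>{b \<in> {Nset V D x | D x. D \<in> I \<and> x \<in> fspace V}. b \<subseteq> W}"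
  proof
    fix x assume x: "x \<in> W"
    then obtain D where D: "D \<in> I" "Nset V D x \<subseteq> W" using W unfolding openT_iff by blast
    have xf: "x \<in> fspace V" using x W unfolding openT_iff by blast
    then have "Nset V D x \<in> {b \<in> {Nset V D x | D x. D \<in> I \<and> x \<in> fspace V}. b \<subseteq> W}" using D by blast
    moreover have "x \<in> Nset V D x" using xf by (rule Nset_self)
    ultimately show "x \<in> \<Union>{b \<in> {Nset V D x | D x. D \<in> I \<and> x \<in> fspace V}. b \<subseteq> W}" by blast
  qed
qed

lemma B0_basis: "open_basis T {Nset V D x | D x. D \<in> I \<and> x \<in> fspace V}"
  unfolding open_basis_def
proof (intro conjI allI impI ballI)
  fix U assume "U \<in> {Nset V D x | D x. D \<in> I \<and> x \<in> fspace V}"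
  then show "openin T U" using openT_Nset by blast
next
  fix W assume W: "openin T W"
  show "\<exists>C\<subseteq>{Nset V D x | D x. D \<in> I \<and> x \<in> fspace V}. \<Union>C = W"
  proof (intro exI conjI)
    show "{b \<in> {Nset V D x | D x. D \<in> I \<and> x \<in> fspace V}. b \<subseteq> W} \<subseteq> {Nset V D x | D x. D \<in> I \<and> x \<in> fspace V}"
      by (rule Collect_restrict)
    show "\<Union>{b \<in> {Nset V D x | D x. D \<in> I \<and> x \<in> fspace V}. b \<subseteq> W} = W"
      using B0_union[OF W] by (rule sym)
  qed
qed

lemma F1: "|UNIV :: ('a \<Rightarrow> 'a) set| \<le>o |Pow (UNIV :: 'a set)|"
proof -
  have "|UNIV :: ('a \<Rightarrow> 'a) set| \<le>o |Pow (UNIV :: ('a \<times> 'a) set)|"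
  proof (rule card_of_ordLeqI[of "\<lambda>f. range (\<lambda>i. (i, f i))"])
    show "inj_on (\<lambda>f. range (\<lambda>i. (i, f i))) (UNIV :: ('a \<Rightarrow> 'a) set)"
    proof (rule inj_onI)
      fix f g :: "'a \<Rightarrow> 'a" assume "range (\<lambda>i. (i, f i)) = range (\<lambda>i. (i, g i))"
      then have "(i, f i) \<in> range (\<lambda>i. (i, g i))" for i by blast
      then show "f = g" by auto
    qed
  qed auto
  moreover have "|Pow (UNIV :: ('a \<times> 'a) set)| \<le>o |Pow (UNIV :: 'a set)|"
  proof (rule Pow_mono_card)
    have "|(UNIV :: 'a set) \<times> (UNIV :: 'a set)| =o |UNIV :: 'a set|"
      using infinite_UNIV by (rule card_of_Times_same_infinite)
    then show "|UNIV :: ('a \<times> 'a) set| \<le>o |UNIV :: 'a set|" by (simp add: ordIso_imp_ordLeq)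
  qed
  ultimately show ?thesis by (rule ordLeq_transitive)
qed

lemma B0_card: "|{Nset V D x | D x. D \<in> I \<and> x \<in> fspace V}| \<le>o |Pow (UNIV :: 'a set)|"
proof -
  have "{Nset V D x | D x. D \<in> I \<and> x \<in> fspace V} \<subseteq> (\<lambda>(D, x). Nset V D x) ` (Pow (UNIV :: 'a set) \<times> (UNIV :: ('a \<Rightarrow> 'a) set))"
    by auto
  then have "|{Nset V D x | D x. D \<in> I \<and> x \<in> fspace V}| \<le>o |(\<lambda>(D, x). Nset V D x) ` (Pow (UNIV :: 'a set) \<times> (UNIV :: ('a \<Rightarrow> 'a) set))|"
    by (rule card_of_mono1)
  moreover have "|(\<lambda>(D, x). Nset V D x) ` (Pow (UNIV :: 'a set) \<times> (UNIV :: ('a \<Rightarrow> 'a) set))| \<le>o |Pow (UNIV :: 'a set) \<times> (UNIV :: ('a \<Rightarrow> 'a) set)|"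
    by (rule card_of_image)
  ultimately have "|{Nset V D x | D x. D \<in> I \<and> x \<in> fspace V}| \<le>o |Pow (UNIV :: 'a set) \<times> (UNIV :: ('a \<Rightarrow> 'a) set)|"
    by (rule ordLeq_transitive)
  moreover have "|Pow (UNIV :: 'a set) \<times> (UNIV :: ('a \<Rightarrow> 'a) set)| \<le>o |Pow (UNIV :: 'a set) \<times> Pow (UNIV :: 'a set)|"
    using F1 by (rule card_of_Times_mono2)
  moreover have "|Pow (UNIV :: 'a set) \<times> Pow (UNIV :: 'a set)| =o |Pow (UNIV :: 'a set)|"
  proof (rule card_of_Times_same_infinite)
    show "infinite (Pow (UNIV :: 'a set))" using infinite_UNIV finite_Pow_iff[of "UNIV :: 'a set"] by blast
  qed
  ultimately show ?thesis by (meson ordLeq_transitive ordIso_imp_ordLeq)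
qed

end


locale unb = setting +
  fixes A :: "'a set" and v0 v1 :: 'a
  assumes A_I: "A \<in> I" and A_unb: "\<not> kbounded r A"
    and v0: "v0 \<in> V" and v1: "v1 \<in> V" and v01: "v0 \<noteq> v1"
begin

lemma A_card: "|A| =o |UNIV :: 'a set|"
proof -
  have sub: "A \<subseteq> Field r" using kappa_field by simp
  have "cofinal A r" unfolding cofinal_def
  proof
    fix a assume "a \<in> Field r"
    from A_unb have "\<not> (\<forall>\<alpha>\<in>A. (\<alpha>, a) \<in> r)" unfolding kbounded_def using kappa_field by auto
    then obtain b where b: "b \<in> A" "(b, a) \<notin> r" by blast
    have "well_order_on (Field r) r" using kappa_card by (rule card_order_on_well_order_on)
    then have lin: "refl_on (Field r) r" "total_on (Field r) r"
      unfolding well_order_on_def linear_order_on_def partial_order_on_def preorder_on_def by blast+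
    have "a \<noteq> b" using b(2) lin(1) kappa_field by (auto simp: refl_on_def)
    moreover have "(a, b) \<in> r" using lin(2) b(2) \<open>a \<noteq> b\<close> kappa_field unfolding total_on_def by blast
    ultimately show "\<exists>b\<in>A. a \<noteq> b \<and> (a, b) \<in> r" using b(1) by blast
  qed
  then have "|A| =o r" using kappa_regular sub unfolding regularCard_def by blast
  then show ?thesis using ordIso_symmetric[OF UNIV_r] by (rule ordIso_transitive)
qed

lemma PowA_W: "|Pow A| =o |Pow (UNIV :: 'a set)|"
  using A_card by (rule Pow_cong_card)

definition g :: "'a set \<Rightarrow> 'a \<Rightarrow> 'a" where
  "g S = (\<lambda>i. if i \<in> S then v1 else v0)"

abbreviation "Nbox S \<equiv> Nset V A (g S)"

lemma g_fs: "g S \<in> fspace V"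
  unfolding g_def fspace_def using v0 v1 by auto

lemma g_in: "g S \<in> Nbox S"
  using g_fs by (rule Nset_self)

lemma Nbox_open: "openin T (Nbox S)"
  using A_I by (rule openT_Nset)

lemma g_inj: "g S = g S' \<Longrightarrow> S = S'"
proof -
  assume eq: "g S = g S'"
  show "S = S'"
  proof (intro set_eqI)
    fix i
    have "g S i = g S' i" using eq by simp
    then show "i \<in> S \<longleftrightarrow> i \<in> S'" unfolding g_def using v01 by (auto split: if_splits)
  qed
qed

lemma Nbox_disj:
  assumes "S \<subseteq> A" "S' \<subseteq> A" "y \<in> Nbox S" "y \<in> Nbox S'"
  shows "S = S'"
proof (intro set_eqI)
  fix i
  show "i \<in> S \<longleftrightarrow> i \<in> S'"
  proof (cases "i \<in> A")
    case True
    then have "y i = g S i" "y i = g S' i" using assms(3,4) unfolding Nset_def by auto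
    then show ?thesis unfolding g_def using v01 by (auto split: if_splits)
  next
    case False
    then show ?thesis using assms(1,2) by blast
  qed
qed

lemma pick_pts:
  assumes H: "\<forall>S\<in>Pow A. \<exists>y\<in>X. y \<in> Nbox S"
  shows "|Pow A| \<le>o |X|"
proof -
  obtain h where h: "\<And>S. S \<in> Pow A \<Longrightarrow> h S \<in> X \<and> h S \<in> Nbox S" using H by metis
  show ?thesis
  proof (rule card_of_ordLeqI[of h])
    show "inj_on h (Pow A)"
    proof (rule inj_onI)
      fix S S' assume "S \<in> Pow A" "S' \<in> Pow A" "h S = h S'"
      then show "S = S'" using h[of S] h[of S'] Nbox_disj[of S S' "h S"] by auto
    qed
    show "\<And>S. S \<in> Pow A \<Longrightarrow> h S \<in> X" using h by blast
  qed
qed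

lemma pick_sets:
  assumes H: "\<forall>S\<in>Pow A. \<exists>b\<in>X. b \<noteq> {} \<and> b \<subseteq> Nbox S"
  shows "|Pow A| \<le>o |X|"
proof -
  obtain h where h: "\<And>S. S \<in> Pow A \<Longrightarrow> h S \<in> X \<and> h S \<noteq> {} \<and> h S \<subseteq> Nbox S" using H by metis
  show ?thesis
  proof (rule card_of_ordLeqI[of h])
    show "inj_on h (Pow A)"
    proof (rule inj_onI)
      fix S S' assume S: "S \<in> Pow A" "S' \<in> Pow A" "h S = h S'"
      then obtain y where "y \<in> h S" using h by blast
      then have "y \<in> Nbox S" "y \<in> Nbox S'" using h[OF S(1)] h[OF S(2)] S(3) by auto
      then show "S = S'" using S Nbox_disj by blast
    qed
    show "\<And>S. S \<in> Pow A \<Longrightarrow> h S \<in> X" using h by blast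
  qed
qed

lemma cover_lower:
  assumes sub: "\<V> \<subseteq> {Nset V A x | x. x \<in> fspace V}" and cov: "fspace V \<subseteq> \<Union>\<V>"
  shows "|Pow A| \<le>o |\<V>|"
proof (rule pick_sets, intro ballI)
  fix S assume "S \<in> Pow A"
  obtain b where b: "b \<in> \<V>" "g S \<in> b" using cov g_fs by blast
  then obtain x where "b = Nset V A x" using sub by blast
  then have "b = Nbox S" using Nset_eq[of "g S" A x] b(2) by simp
  then show "\<exists>b\<in>\<V>. b \<noteq> {} \<and> b \<subseteq> Nbox S" using b by blast
qed

lemma part4: "\<not> compact_space T \<and> \<not> kappa_compact r T"
proof -
  let ?U = "{Nset V A x | x. x \<in> fspace V}"
  have Uo: "\<forall>U\<in>?U. openin T U" using openT_Nset[OF A_I] by blast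
  have Uc: "topspace T \<subseteq> \<Union>?U" unfolding topspaceT
  proof
    fix x :: "'a \<Rightarrow> 'a" assume "x \<in> fspace V"
    then have "x \<in> Nset V A x" "Nset V A x \<in> ?U" using Nset_self by blast+
    then show "x \<in> \<Union>?U" by blast
  qed
  have infA: "infinite A" using card_of_ordIso_finite[OF A_card] infinite_UNIV by simp
  have c1: "\<not> compact_space T"
  proof
    assume "compact_space T"
    then have "\<forall>\<U>. (\<forall>U \<in> \<U>. openin T U) \<and> topspace T \<subseteq> \<Union>\<U>
          \<longrightarrow> (\<exists>\<F>. finite \<F> \<and> \<F> \<subseteq> \<U> \<and> topspace T \<subseteq> \<Union>\<F>)"
      unfolding compact_space_def compactin_def by blast
    then have "\<exists>\<F>. finite \<F> \<and> \<F> \<subseteq> ?U \<and> topspace T \<subseteq> \<Union>\<F>" using Uo Uc by blast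
    then obtain F where F: "finite F" "F \<subseteq> ?U" "topspace T \<subseteq> \<Union>F" by blast
    have "|Pow A| \<le>o |F|" using cover_lower[OF F(2)] F(3) unfolding topspaceT by blast
    then have "finite (Pow A)" using F(1) by (rule card_of_ordLeq_finite)
    then show False using infA by simp
  qed
  have c2: "\<not> kappa_compact r T"
  proof
    assume "kappa_compact r T"
    then have "\<forall>\<U>. (\<forall>U\<in>\<U>. openin T U) \<and> topspace T \<subseteq> \<Union>\<U> \<longrightarrow>
      (\<exists>\<V>\<subseteq>\<U>. |\<V>| <o r \<and> topspace T \<subseteq> \<Union>\<V>)" unfolding kappa_compact_def by blast
    then have "\<exists>\<V>\<subseteq>?U. |\<V>| <o r \<and> topspace T \<subseteq> \<Union>\<V>" using Uo Uc by blast
    then obtain F where F: "F \<subseteq> ?U" "|F| <o r" "topspace T \<subseteq> \<Union>F" by blast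
    have le: "|Pow A| \<le>o |F|" using cover_lower[OF F(1)] F(3) unfolding topspaceT by blast
    have "r =o |A|" using ordIso_transitive[OF A_card UNIV_r] by (rule ordIso_symmetric)
    then have "|F| <o |A|" using F(2) ordLess_ordIso_trans by blast
    then have "|F| <o |Pow A|" using card_of_Pow by (rule ordLess_transitive)
    then show False using le not_ordLess_ordLeq by blast
  qed
  show ?thesis using c1 c2 by blast
qed

lemma basis_lower:
  assumes B: "open_basis T B" shows "|Pow A| \<le>o |B|"
proof (rule pick_sets, intro ballI)
  fix S assume "S \<in> Pow A"
  have "\<forall>W. openin T W \<longrightarrow> (\<exists>C\<subseteq>B. \<Union>C = W)" using B unfolding open_basis_def by blast
  then have "\<exists>C\<subseteq>B. \<Union>C = Nbox S" using Nbox_open[of S] by blast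
  then obtain C where C0: "C \<subseteq> B \<and> \<Union>C = Nbox S" by (rule exE)
  then have C: "C \<subseteq> B" "\<Union>C = Nbox S" by (rule conjunct1, rule conjunct2)
  have "g S \<in> \<Union>C" by (subst C(2)) (rule g_in)
  then obtain b where b: "b \<in> C" "g S \<in> b" by (rule UnionE)
  have "b \<subseteq> \<Union>C" using b(1) by (rule Union_upper)
  then have "b \<subseteq> Nbox S" by (simp only: C(2))
  then show "\<exists>b\<in>B. b \<noteq> {} \<and> b \<subseteq> Nbox S" using C(1) b by blast
qed

lemma part5a: "weight_is T (card_of (Pow (UNIV :: 'a set)))"
  unfolding weight_is_def
proof (intro conjI allI impI)
  fix B assume "open_basis T B"
  then have "|Pow A| \<le>o |B|" by (rule basis_lower)
  then show "|Pow (UNIV :: 'a set)| \<le>o |B|" by (rule ordIso_ordLeq_trans[OF ordIso_symmetric[OF PowA_W]])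
next
  have le: "|{Nset V D x | D x. D \<in> I \<and> x \<in> fspace V}| \<le>o |Pow (UNIV :: 'a set)|" by (rule B0_card)
  have "|Pow A| \<le>o |{Nset V D x | D x. D \<in> I \<and> x \<in> fspace V}|" using B0_basis by (rule basis_lower)
  then have ge: "|Pow (UNIV :: 'a set)| \<le>o |{Nset V D x | D x. D \<in> I \<and> x \<in> fspace V}|"
    by (rule ordIso_ordLeq_trans[OF ordIso_symmetric[OF PowA_W]])
  have "|{Nset V D x | D x. D \<in> I \<and> x \<in> fspace V}| =o |Pow (UNIV :: 'a set)|"
    using le ge by (simp add: ordIso_iff_ordLeq)
  then show "\<exists>B. open_basis T B \<and> |B| =o |Pow (UNIV :: 'a set)|" using B0_basis by blast
qed

lemma part5b: "|{U. openin T U}| =o |Pow (Pow (UNIV :: 'a set))|"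
proof -
  let ?B0 = "{Nset V D x | D x. D \<in> I \<and> x \<in> fspace V}"
  have le1: "|{U. openin T U}| \<le>o |Pow ?B0|"
  proof (rule card_of_ordLeqI[of "\<lambda>U. {b \<in> ?B0. b \<subseteq> U}"])
    show "inj_on (\<lambda>U. {b \<in> ?B0. b \<subseteq> U}) {U. openin T U}"
    proof (rule inj_onI)
      fix U U' assume U: "U \<in> {U. openin T U}" "U' \<in> {U. openin T U}"
        and eq: "{b \<in> ?B0. b \<subseteq> U} = {b \<in> ?B0. b \<subseteq> U'}"
      have "U = \<Union>{b \<in> ?B0. b \<subseteq> U}" using U(1) B0_union by blast
      also have "\<dots> = \<Union>{b \<in> ?B0. b \<subseteq> U'}" using eq by simp
      also have "\<dots> = U'" using U(2) B0_union by blast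
      finally show "U = U'" .
    qed
  qed auto
  have le2: "|Pow ?B0| \<le>o |Pow (Pow (UNIV :: 'a set))|" using B0_card by (rule Pow_mono_card)
  have ge1: "|Pow (Pow A)| \<le>o |{U. openin T U}|"
  proof (rule card_of_ordLeqI[of "\<lambda>SS. \<Union>(Nbox ` SS)"])
    show "inj_on (\<lambda>SS. \<Union>(Nbox ` SS)) (Pow (Pow A))"
    proof (rule inj_onI)
      have key: "SS \<subseteq> SS'" if SS: "SS \<in> Pow (Pow A)" "SS' \<in> Pow (Pow A)"
        and eq: "\<Union>(Nbox ` SS) = \<Union>(Nbox ` SS')" for SS SS'
      proof
        fix S assume S: "S \<in> SS"
        then have "g S \<in> \<Union>(Nbox ` SS')" using eq g_in by blast
        then obtain S' where S': "S' \<in> SS'" "g S \<in> Nbox S'" by blast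
        have "S = S'" using Nbox_disj[of S S' "g S"] S S' SS g_in by blast
        then show "S \<in> SS'" using S' by simp
      qed
      fix SS SS' assume "SS \<in> Pow (Pow A)" "SS' \<in> Pow (Pow A)" "\<Union>(Nbox ` SS) = \<Union>(Nbox ` SS')"
      then show "SS = SS'" using key[of SS SS'] key[of SS' SS] by auto
    qed
    show "\<And>SS. SS \<in> Pow (Pow A) \<Longrightarrow> \<Union>(Nbox ` SS) \<in> {U. openin T U}"
      using Nbox_open by (auto intro: openin_Union)
  qed
  have "|Pow (Pow A)| =o |Pow (Pow (UNIV :: 'a set))|" using PowA_W by (rule Pow_cong_card)
  then have ge: "|Pow (Pow (UNIV :: 'a set))| \<le>o |{U. openin T U}|"
    using ordIso_ordLeq_trans[OF ordIso_symmetric ge1] by blast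
  have le: "|{U. openin T U}| \<le>o |Pow (Pow (UNIV :: 'a set))|" using le1 le2 by (rule ordLeq_transitive)
  show ?thesis using le ge by (simp add: ordIso_iff_ordLeq)
qed

lemma part6: "density_is T (card_of (Pow (UNIV :: 'a set)))"
  unfolding density_is_def
proof (intro conjI allI impI exI)
  fix D assume D: "D \<subseteq> topspace T \<and> T closure_of D = topspace T"
  have "|Pow A| \<le>o |D|"
  proof (rule pick_pts, intro ballI)
    fix S assume "S \<in> Pow A"
    have "g S \<in> T closure_of D" using D g_fs topspaceT by simp
    then show "\<exists>y\<in>D. y \<in> Nbox S" using g_in Nbox_open unfolding in_closure_of by blast
  qed
  then show "|Pow (UNIV :: 'a set)| \<le>o |D|" by (rule ordIso_ordLeq_trans[OF ordIso_symmetric[OF PowA_W]])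
next
  show "topspace T \<subseteq> topspace T" by simp
  show "T closure_of topspace T = topspace T" by simp
  have le: "|topspace T| \<le>o |Pow (UNIV :: 'a set)|"
    using card_of_mono1[of "topspace T" "UNIV :: ('a \<Rightarrow> 'a) set"] F1 by (rule ordLeq_transitive) simp
  have ge: "|Pow (UNIV :: 'a set)| \<le>o |topspace T|"
  proof (rule card_of_ordLeqI[of g])
    show "inj_on g (Pow UNIV)" using g_inj by (auto intro: inj_onI)
    show "\<And>S. S \<in> Pow UNIV \<Longrightarrow> g S \<in> topspace T" using g_fs topspaceT by simp
  qed
  show "|topspace T| =o |Pow (UNIV :: 'a set)|" using le ge by (simp add: ordIso_iff_ordLeq)
qed

end


theorem lemma2p5:
  fixes r :: "'a rel" and I :: "'a set set" and V :: "'a set"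
  assumes kappa_card: "Card_order r" and kappa_field: "Field r = UNIV"
    and kappa_regular: "regularCard r"
    and kappa_uncountable: "natLeq <o r"
    and ideal: "kcomplete_proper_ideal r I"
    and bounded_in: "\<And>A. kbounded r A \<Longrightarrow> A \<in> I"
    and nu: "V = UNIV \<or> card V = 2"
  defines "T \<equiv> tauI I V"
  shows
    "(no_isolated_points T \<and> regular_space T \<and> Hausdorff_space T \<and> zero_dim T)
     \<and>
     (\<forall>s :: 'c rel. Well_order s \<longrightarrow>
       ((\<forall>U. (\<forall>\<beta>\<in>Field s. openin T (U \<beta>)) \<longrightarrow>
              openin T (topspace T \<inter> (\<Inter>\<beta>\<in>Field s. U \<beta>)))
        \<longleftrightarrow> s <o r))
     \<and>
     ((\<forall>C. clopenin T C \<longrightarrow> clopenin T (topspace T - C)) \<and>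
      (\<forall>F. (\<forall>C\<in>F. clopenin T C) \<and> |F| <o r \<longrightarrow> clopenin T (\<Union>F)))
     \<and>
     (\<forall>x\<in>topspace T. \<forall>B. open_nbhd_basis T x B \<longrightarrow> r \<le>o card_of B)
     \<and>
     ((\<forall>x\<in>topspace T. \<exists>B. open_nbhd_basis T x B \<and> |B| =o r)
       \<longleftrightarrow> (\<exists>B. ideal_basis I B \<and> |B| =o r))
     \<and>
     ((\<exists>A\<in>I. \<not> kbounded r A) \<longrightarrow>
        (\<not> compact_space T \<and> \<not> kappa_compact r T)
        \<and> (weight_is T (card_of (Pow (UNIV :: 'a set))) \<and>
           card_of {U. openin T U} =o card_of (Pow (Pow (UNIV :: 'a set))))
        \<and> density_is T (card_of (Pow (UNIV :: 'a set))))"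
proof -
  interpret setting r I V
    using kappa_card kappa_field kappa_regular kappa_uncountable ideal bounded_in nu
    by (unfold_locales) auto
  have P1: "no_isolated_points T \<and> regular_space T \<and> Hausdorff_space T \<and> zero_dim T"
    unfolding T_def by (rule part1)
  have P2: "\<forall>s :: 'c rel. Well_order s \<longrightarrow>
       ((\<forall>U. (\<forall>\<beta>\<in>Field s. openin T (U \<beta>)) \<longrightarrow>
              openin T (topspace T \<inter> (\<Inter>\<beta>\<in>Field s. U \<beta>)))
        \<longleftrightarrow> s <o r)"
    unfolding T_def using part2 by blast
  have P2b: "(\<forall>C. clopenin T C \<longrightarrow> clopenin T (topspace T - C)) \<and>
      (\<forall>F. (\<forall>C\<in>F. clopenin T C) \<and> |F| <o r \<longrightarrow> clopenin T (\<Union>F))"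
    unfolding T_def by (rule part2b)
  have P3a: "\<forall>x\<in>topspace T. \<forall>B. open_nbhd_basis T x B \<longrightarrow> r \<le>o card_of B"
    unfolding T_def topspaceT using nbhd_lower by blast
  have P3b: "(\<forall>x\<in>topspace T. \<exists>B. open_nbhd_basis T x B \<and> |B| =o r)
       \<longleftrightarrow> (\<exists>B. ideal_basis I B \<and> |B| =o r)"
    unfolding T_def by (rule part3)
  have P4: "(\<exists>A\<in>I. \<not> kbounded r A) \<longrightarrow>
        (\<not> compact_space T \<and> \<not> kappa_compact r T)
        \<and> (weight_is T (card_of (Pow (UNIV :: 'a set))) \<and>
           card_of {U. openin T U} =o card_of (Pow (Pow (UNIV :: 'a set))))
        \<and> density_is T (card_of (Pow (UNIV :: 'a set)))"
  proof
    assume "\<exists>A\<in>I. \<not> kbounded r A"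
    then obtain A where A: "A \<in> I" "\<not> kbounded r A" by blast
    obtain v0 where v0: "v0 \<in> V" using V_ne by blast
    obtain v1 where v1: "v1 \<in> V" "v1 \<noteq> v0" using V_two[OF v0] by blast
    interpret unb r I V A v0 v1
      using A v0 v1 by (unfold_locales) auto
    show "(\<not> compact_space T \<and> \<not> kappa_compact r T)
        \<and> (weight_is T (card_of (Pow (UNIV :: 'a set))) \<and>
           card_of {U. openin T U} =o card_of (Pow (Pow (UNIV :: 'a set))))
        \<and> density_is T (card_of (Pow (UNIV :: 'a set)))"
      unfolding T_def using part4 part5a part5b part6 by blast
  qed
  show ?thesis using P1 P2 P2b P3a P3b P4 by blast
qed

end
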